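(* For every integer $n\ge 4$, $\mathrm{wdim}_2(K_n\times K_n)=n+\lceil n/3\rceil$.
   Context: $K_n\times K_n$ is the direct product of two complete graphs on $n$ vertices: vertex set $[n]\times[n]$ with $[n]=\{1,\dots,n\}$, and $(i,j)$ adjacent to $(i',j')$ iff $i\ne i'$ and $j\ne j'$. For a connected graph $G$ with distance $d_G$, vertices $x,y,z$ and $S\subseteq V(G)$, let $\Delta_z(x,y)=|d_G(x,z)-d_G(y,z)|$ and $\Delta_S(x,y)=\sum_{z\in S}\Delta_z(x,y)$. A set $S$ is a weak $k$-resolving set if $\Delta_S(x,y)\ge k$ for all distinct $x,y\in V(G)$, and $\mathrm{wdim}_k(G)$ (the weak $k$-metric dimension) is the minimum cardinality of a weak $k$-resolving set of $G$. *)

theory Defs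
  imports Complex_Main
begin

text \<open>A graph is given by a vertex set V and a symmetric irreflexive adjacency relation E.
  walk E V n x y: there is a walk with n edges from x to y, staying in V.\<close>

fun walk :: "('a \<Rightarrow> 'a \<Rightarrow> bool) \<Rightarrow> 'a set \<Rightarrow> nat \<Rightarrow> 'a \<Rightarrow> 'a \<Rightarrow> bool" where
  "walk E V 0 x y \<longleftrightarrow> x \<in> V \<and> x = y"
| "walk E V (Suc n) x y \<longleftrightarrow> x \<in> V \<and> (\<exists>z\<in>V. E x z \<and> walk E V n z y)"

definition gdist :: "('a \<Rightarrow> 'a \<Rightarrow> bool) \<Rightarrow> 'a set \<Rightarrow> 'a \<Rightarrow> 'a \<Rightarrow> nat" where
  "gdist E V x y = (LEAST n. walk E V n x y)"

definition connected_graph :: "('a \<Rightarrow> 'a \<Rightarrow> bool) \<Rightarrow> 'a set \<Rightarrow> bool" where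
  "connected_graph E V \<longleftrightarrow> V \<noteq> {} \<and> (\<forall>x\<in>V. \<forall>y\<in>V. \<exists>n. walk E V n x y)"

definition delta_z :: "('a \<Rightarrow> 'a \<Rightarrow> bool) \<Rightarrow> 'a set \<Rightarrow> 'a \<Rightarrow> 'a \<Rightarrow> 'a \<Rightarrow> nat" where
  "delta_z E V z x y = nat \<bar>int (gdist E V x z) - int (gdist E V y z)\<bar>"

definition delta_S :: "('a \<Rightarrow> 'a \<Rightarrow> bool) \<Rightarrow> 'a set \<Rightarrow> 'a set \<Rightarrow> 'a \<Rightarrow> 'a \<Rightarrow> nat" where
  "delta_S E V S x y = (\<Sum>z\<in>S. delta_z E V z x y)"

definition weak_k_resolving :: "('a \<Rightarrow> 'a \<Rightarrow> bool) \<Rightarrow> 'a set \<Rightarrow> nat \<Rightarrow> 'a set \<Rightarrow> bool" where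
  "weak_k_resolving E V k S \<longleftrightarrow> S \<subseteq> V \<and>
     (\<forall>x\<in>V. \<forall>y\<in>V. x \<noteq> y \<longrightarrow> delta_S E V S x y \<ge> k)"

text \<open>Weak k-metric dimension: minimum cardinality of a weak k-resolving set
  (graphs here are finite, so subsets are finite).\<close>
definition wdim :: "nat \<Rightarrow> ('a \<Rightarrow> 'a \<Rightarrow> bool) \<Rightarrow> 'a set \<Rightarrow> nat" where
  "wdim k E V = (LEAST m. \<exists>S. weak_k_resolving E V k S \<and> card S = m)"

definition KnKn_V :: "nat \<Rightarrow> (nat \<times> nat) set" where
  "KnKn_V n = {1..n} \<times> {1..n}"

definition KnKn_E :: "nat \<times> nat \<Rightarrow> nat \<times> nat \<Rightarrow> bool" where
  "KnKn_E p q \<longleftrightarrow> fst p \<noteq> fst q \<and> snd p \<noteq> snd q"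

end

theory Submission
  imports Defs
begin


definition dd :: "nat \<times> nat \<Rightarrow> nat \<times> nat \<Rightarrow> nat" where
  "dd x z = (if x = z then 0 else if fst x \<noteq> fst z \<and> snd x \<noteq> snd z then 1 else 2)"

lemma walk0: "walk E V 0 x y \<longleftrightarrow> x \<in> V \<and> x = y" by simp
lemma walk1: "walk E V (Suc 0) x y \<longleftrightarrow> x \<in> V \<and> y \<in> V \<and> E x y" by auto

lemma common_nb:
  assumes "n \<ge> 3" "x \<in> KnKn_V n" "y \<in> KnKn_V n"
  shows "\<exists>z\<in>KnKn_V n. KnKn_E x z \<and> KnKn_E z y"
proof -
  have "card ({1..n} - {fst x, fst y}) \<ge> card {1..n} - card {fst x, fst y}"
    by (rule diff_card_le_card_Diff) simp
  moreover have "card {fst x, fst y} \<le> 2" by (simp add: card_insert_le_m1)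
  ultimately have "card ({1..n} - {fst x, fst y}) > 0" using assms(1) by simp
  then obtain a where a: "a \<in> {1..n}" "a \<noteq> fst x" "a \<noteq> fst y"
    by (metis Diff_iff all_not_in_conv card.empty insertCI less_irrefl)
  have "card ({1..n} - {snd x, snd y}) \<ge> card {1..n} - card {snd x, snd y}"
    by (rule diff_card_le_card_Diff) simp
  moreover have "card {snd x, snd y} \<le> 2" by (simp add: card_insert_le_m1)
  ultimately have "card ({1..n} - {snd x, snd y}) > 0" using assms(1) by simp
  then obtain b where b: "b \<in> {1..n}" "b \<noteq> snd x" "b \<noteq> snd y"
    by (metis Diff_iff all_not_in_conv card.empty insertCI less_irrefl)
  show ?thesis using a b
    by (intro bexI[of _ "(a,b)"]) (auto simp: KnKn_E_def KnKn_V_def)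
qed

lemma gdist_eq:
  assumes "n \<ge> 3" "x \<in> KnKn_V n" "y \<in> KnKn_V n"
  shows "gdist KnKn_E (KnKn_V n) x y = dd x y"
proof -
  have w0: "walk KnKn_E (KnKn_V n) 0 x y \<longleftrightarrow> x = y" using assms by simp
  have w1: "walk KnKn_E (KnKn_V n) 1 x y \<longleftrightarrow> KnKn_E x y" using assms
    by (simp only: One_nat_def walk1) simp
  have w2: "walk KnKn_E (KnKn_V n) 2 x y" if "x \<noteq> y" "\<not> KnKn_E x y"
  proof -
    obtain z where "z \<in> KnKn_V n" "KnKn_E x z" "KnKn_E z y"
      using common_nb[OF assms] by blast
    then show ?thesis using assms by (simp add: numeral_2_eq_2) blast
  qed
  have wpos: "walk KnKn_E (KnKn_V n) m x y \<Longrightarrow> x \<noteq> y \<Longrightarrow> 0 < m" for m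
    by (cases m) auto
  have lt2: "m < 2 \<Longrightarrow> m = 0 \<or> m = 1" for m :: nat by auto
  show ?thesis
  proof (cases "x = y")
    case True
    then show ?thesis unfolding gdist_def dd_def using w0
      by (intro Least_equality) auto
  next
    case ne: False
    show ?thesis
    proof (cases "KnKn_E x y")
      case True
      then have "fst x \<noteq> fst y \<and> snd x \<noteq> snd y" by (simp add: KnKn_E_def)
      then show ?thesis unfolding gdist_def dd_def using w0 w1 ne True
        by (intro Least_equality) (auto simp: Suc_le_eq intro: wpos)
    next
      case False
      then have "\<not> (fst x \<noteq> fst y \<and> snd x \<noteq> snd y)" by (simp add: KnKn_E_def)
      then show ?thesis unfolding gdist_def dd_def using w0 w1 w2 ne False
        by (intro Least_equality) (auto simp: not_less[symmetric] dest!: lt2)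
    qed
  qed
qed


definition DD :: "nat \<times> nat \<Rightarrow> nat \<times> nat \<Rightarrow> nat \<times> nat \<Rightarrow> nat" where
  "DD z x y = nat \<bar>int (dd x z) - int (dd y z)\<bar>"

lemma DD_le2: "DD z x y \<le> 2"
  by (simp add: DD_def dd_def)

lemma finite_V: "finite (KnKn_V n)" by (simp add: KnKn_V_def)

lemma delta_S_eq:
  assumes "n \<ge> 3" "S \<subseteq> KnKn_V n" "x \<in> KnKn_V n" "y \<in> KnKn_V n"
  shows "delta_S KnKn_E (KnKn_V n) S x y = (\<Sum>z\<in>S. DD z x y)"
  unfolding delta_S_def delta_z_def DD_def
  by (intro sum.cong refl) (simp add: gdist_eq[OF assms(1)] assms(3,4) subsetD[OF assms(2)])

lemma sum_ge2_iff:
  fixes f :: "'a \<Rightarrow> nat"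
  assumes "finite S" "\<And>z. f z \<le> 2"
  shows "(2 \<le> sum f S) \<longleftrightarrow> ((\<exists>z\<in>S. f z = 2) \<or> (\<exists>z\<in>S. \<exists>z'\<in>S. z \<noteq> z' \<and> 1 \<le> f z \<and> 1 \<le> f z'))"
proof
  assume h: "2 \<le> sum f S"
  show "(\<exists>z\<in>S. f z = 2) \<or> (\<exists>z\<in>S. \<exists>z'\<in>S. z \<noteq> z' \<and> 1 \<le> f z \<and> 1 \<le> f z')"
  proof (rule ccontr)
    assume "\<not> ?thesis"
    then have n2: "\<forall>z\<in>S. f z \<noteq> 2" and n1: "\<forall>z\<in>S. \<forall>z'\<in>S. z \<noteq> z' \<longrightarrow> \<not> (1 \<le> f z \<and> 1 \<le> f z')"
      by blast+
    have a: "\<forall>z\<in>S. f z \<le> 1"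
    proof
      fix z assume "z \<in> S" then have "f z \<noteq> 2" using n2 by blast
      then show "f z \<le> 1" using assms(2)[of z] by linarith
    qed
    have b: "\<forall>z\<in>S. \<forall>z'\<in>S. z \<noteq> z' \<longrightarrow> f z = 0 \<or> f z' = 0"
      using n1 by (metis One_nat_def Suc_leI neq0_conv)
    show False
    proof (cases "\<exists>z\<in>S. 1 \<le> f z")
      case True
      then obtain z where z: "z \<in> S" "1 \<le> f z" by blast
      have "sum f S = f z + sum f (S - {z})" using assms(1) z(1) by (simp add: sum.remove)
      also have "sum f (S - {z}) = 0"
      proof (intro sum.neutral ballI)
        fix x assume "x \<in> S - {z}"
        then show "f x = 0" using b z by force
      qed
      finally have "sum f S = f z" by simp
      then show False using a z h by (metis le_trans not_one_le_zero numeral_le_one_iff semiring_norm(69))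
    next
      case False
      then have "sum f S = 0" by (auto intro!: sum.neutral)
      then show False using h by simp
    qed
  qed
next
  assume "(\<exists>z\<in>S. f z = 2) \<or> (\<exists>z\<in>S. \<exists>z'\<in>S. z \<noteq> z' \<and> 1 \<le> f z \<and> 1 \<le> f z')"
  then show "2 \<le> sum f S"
  proof
    assume "\<exists>z\<in>S. f z = 2"
    then obtain z where "z \<in> S" "f z = 2" by blast
    then show ?thesis using member_le_sum[OF _ _ assms(1), of z f] by simp
  next
    assume "\<exists>z\<in>S. \<exists>z'\<in>S. z \<noteq> z' \<and> 1 \<le> f z \<and> 1 \<le> f z'"
    then obtain z z' where zz: "z \<in> S" "z' \<in> S" "z \<noteq> z'" "1 \<le> f z" "1 \<le> f z'" by blast
    have "sum f {z, z'} \<le> sum f S" using zz assms(1) by (intro sum_mono2) auto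
    then show ?thesis using zz by simp
  qed
qed

definition good :: "(nat \<times> nat) set \<Rightarrow> nat \<times> nat \<Rightarrow> nat \<times> nat \<Rightarrow> bool" where
  "good S x y \<longleftrightarrow> (\<exists>z\<in>S. DD z x y = 2) \<or> (\<exists>z\<in>S. \<exists>z'\<in>S. z \<noteq> z' \<and> 1 \<le> DD z x y \<and> 1 \<le> DD z' x y)"

lemma resolving_iff:
  assumes "n \<ge> 3"
  shows "weak_k_resolving KnKn_E (KnKn_V n) 2 S \<longleftrightarrow>
    S \<subseteq> KnKn_V n \<and> (\<forall>x\<in>KnKn_V n. \<forall>y\<in>KnKn_V n. x \<noteq> y \<longrightarrow> good S x y)"
proof -
  have "2 \<le> delta_S KnKn_E (KnKn_V n) S x y \<longleftrightarrow> good S x y"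
    if "S \<subseteq> KnKn_V n" "x \<in> KnKn_V n" "y \<in> KnKn_V n" for x y
    using delta_S_eq[OF assms that] sum_ge2_iff[of S "\<lambda>z. DD z x y"] DD_le2
      finite_subset[OF that(1) finite_V] unfolding good_def by simp
  then show ?thesis unfolding weak_k_resolving_def by blast
qed



definition star :: "(nat \<times> nat) set \<Rightarrow> bool" where
  "star S \<longleftrightarrow> (\<forall>i j. (i,j) \<in> S \<longrightarrow>
     ((\<forall>j'. (i,j') \<in> S \<longrightarrow> j' = j) \<longleftrightarrow> \<not> (\<forall>i'. (i',j) \<in> S \<longrightarrow> i' = i)))"

definition cover :: "nat \<Rightarrow> (nat \<times> nat) set \<Rightarrow> bool" where
  "cover n S \<longleftrightarrow> (\<forall>i\<in>{1..n}. \<exists>j. (i,j) \<in> S) \<and> (\<forall>j\<in>{1..n}. \<exists>i. (i,j) \<in> S)"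

lemma good_I1: "z \<in> S \<Longrightarrow> DD z x y = 2 \<Longrightarrow> good S x y"
  unfolding good_def by blast
lemma good_I2: "z \<in> S \<Longrightarrow> z' \<in> S \<Longrightarrow> z \<noteq> z' \<Longrightarrow> 1 \<le> DD z x y \<Longrightarrow> 1 \<le> DD z' x y \<Longrightarrow> good S x y"
  unfolding good_def by blast

lemma suff:
  assumes S: "S \<subseteq> KnKn_V n" and st: "star S" and cv: "cover n S"
    and x: "x \<in> KnKn_V n" and y: "y \<in> KnKn_V n" and ne: "x \<noteq> y"
  shows "good S x y"
proof -
  obtain i j i' j' where xy: "x = (i,j)" "y = (i',j')" by (cases x, cases y) auto
  have ij: "i \<in> {1..n}" "j \<in> {1..n}" "i' \<in> {1..n}" "j' \<in> {1..n}"
    using x y xy by (auto simp: KnKn_V_def)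
  have rowI: "\<exists>b. (r,b) \<in> S" if "r \<in> {1..n}" for r using cv that unfolding cover_def by blast
  have colI: "\<exists>a. (a,c) \<in> S" if "c \<in> {1..n}" for c using cv that unfolding cover_def by blast
  have stp: "((\<forall>b'. (a,b') \<in> S \<longrightarrow> b' = b) \<longleftrightarrow> \<not> (\<forall>a'. (a',b) \<in> S \<longrightarrow> a' = a))" if "(a,b) \<in> S" for a b
    using st that unfolding star_def by blast
  show ?thesis
  proof (cases "i = i'")
    case True
    then have jj: "j \<noteq> j'" using ne xy by auto
    show ?thesis
    proof (cases "x \<in> S \<or> y \<in> S")
      case True
      then show ?thesis
      proof
        assume "x \<in> S" then show ?thesis using `i = i'` jj xy
          by (intro good_I1[of x]) (auto simp: DD_def dd_def)
      next
        assume "y \<in> S" then show ?thesis using `i = i'` jj xy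
          by (intro good_I1[of y]) (auto simp: DD_def dd_def)
      qed
    next
      case False
      obtain a where a: "(a,j) \<in> S" using colI ij by blast
      obtain b where b: "(b,j') \<in> S" using colI ij by blast
      have "a \<noteq> i" "b \<noteq> i" using False a b xy `i = i'` by auto
      then show ?thesis using a b jj xy `i = i'`
        by (intro good_I2[of "(a,j)" _ "(b,j')"]) (auto simp: DD_def dd_def)
    qed
  next
    case ii: False
    show ?thesis
    proof (cases "j = j'")
      case True
      show ?thesis
      proof (cases "x \<in> S \<or> y \<in> S")
        case True
        then show ?thesis
        proof
          assume "x \<in> S" then show ?thesis using `j = j'` ii xy
            by (intro good_I1[of x]) (auto simp: DD_def dd_def)
        next
          assume "y \<in> S" then show ?thesis using `j = j'` ii xy
            by (intro good_I1[of y]) (auto simp: DD_def dd_def)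
        qed
      next
        case False
        obtain a where a: "(i,a) \<in> S" using rowI ij by blast
        obtain b where b: "(i',b) \<in> S" using rowI ij by blast
        have "a \<noteq> j" "b \<noteq> j" using False a b xy `j = j'` by auto
        then show ?thesis using a b ii xy `j = j'`
          by (intro good_I2[of "(i,a)" _ "(i',b)"]) (auto simp: DD_def dd_def)
      qed
    next
      case jj: False
      show ?thesis
      proof (cases "(i',j) \<in> S")
        case False
        obtain b where b: "(i',b) \<in> S" using rowI ij by blast
        obtain c where c: "(c,j) \<in> S" using colI ij by blast
        have "b \<noteq> j" "c \<noteq> i'" using False b c by auto
        then show ?thesis using b c ii jj xy
          by (intro good_I2[of "(i',b)" _ "(c,j)"]) (auto simp: DD_def dd_def)
      next
        case q: True
        show ?thesis
        proof (cases "(i,j') \<in> S")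
          case False
          obtain a where a: "(i,a) \<in> S" using rowI ij by blast
          obtain e where e: "(e,j') \<in> S" using colI ij by blast
          have "a \<noteq> j'" "e \<noteq> i" using False a e by auto
          then show ?thesis using a e ii jj xy
            by (intro good_I2[of "(i,a)" _ "(e,j')"]) (auto simp: DD_def dd_def)
        next
          case p: True
          have sp: "(\<forall>b'. (i,b') \<in> S \<longrightarrow> b' = j') \<longleftrightarrow> \<not> (\<forall>a'. (a',j') \<in> S \<longrightarrow> a' = i)"
            using stp[OF p] .
          have sq: "(\<forall>b'. (i',b') \<in> S \<longrightarrow> b' = j) \<longleftrightarrow> \<not> (\<forall>a'. (a',j) \<in> S \<longrightarrow> a' = i')"
            using stp[OF q] .
          have DDe: "1 \<le> DD (e,j') x y" if "e \<noteq> i" for e using that ii jj xy by (auto simp: DD_def dd_def)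
          have DDa: "1 \<le> DD (i,a) x y" if "a \<noteq> j'" for a using that ii jj xy by (auto simp: DD_def dd_def)
          have DDc: "1 \<le> DD (c,j) x y" if "c \<noteq> i'" for c using that ii jj xy by (auto simp: DD_def dd_def)
          have DDb: "1 \<le> DD (i',b) x y" if "b \<noteq> j" for b using that ii jj xy by (auto simp: DD_def dd_def)
          show ?thesis
          proof (cases "\<forall>b'. (i,b') \<in> S \<longrightarrow> b' = j'")
            case A: True
            then obtain e where e: "(e,j') \<in> S" "e \<noteq> i" using sp by blast
            show ?thesis
            proof (cases "\<forall>b'. (i',b') \<in> S \<longrightarrow> b' = j")
              case True
              then obtain c where c: "(c,j) \<in> S" "c \<noteq> i'" using sq by blast
              show ?thesis using e c jj by (intro good_I2[OF e(1) c(1)] DDe DDc) auto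
            next
              case False
              then obtain b where b: "(i',b) \<in> S" "b \<noteq> j" by blast
              have D: "\<forall>a'. (a',j) \<in> S \<longrightarrow> a' = i'" using sq False by blast
              have "(e,j') \<noteq> (i',b)"
              proof
                assume eq: "(e,j') = (i',b)"
                then have yS: "(i',j') \<in> S" using e by simp
                have "\<not> (\<forall>b'. (i',b') \<in> S \<longrightarrow> b' = j')" using q jj by blast
                moreover have "\<not> (\<forall>a'. (a',j') \<in> S \<longrightarrow> a' = i')" using p ii by blast
                ultimately show False using stp[OF yS] by blast
              qed
              then show ?thesis using e b by (intro good_I2[OF e(1) b(1)] DDe DDb) auto
            qed
          next
            case B: False
            then obtain a where a: "(i,a) \<in> S" "a \<noteq> j'" by blast
            show ?thesis
            proof (cases "\<forall>b'. (i',b') \<in> S \<longrightarrow> b' = j")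
              case True
              then obtain c where c: "(c,j) \<in> S" "c \<noteq> i'" using sq by blast
              have "(i,a) \<noteq> (c,j)"
              proof
                assume eq: "(i,a) = (c,j)"
                then have xS: "(i,j) \<in> S" using a by simp
                have "\<not> (\<forall>b'. (i,b') \<in> S \<longrightarrow> b' = j)" using p jj by blast
                moreover have "\<not> (\<forall>a'. (a',j) \<in> S \<longrightarrow> a' = i)" using q ii by blast
                ultimately show False using stp[OF xS] by blast
              qed
              then show ?thesis using a c by (intro good_I2[OF a(1) c(1)] DDa DDc) auto
            next
              case False
              then obtain b where b: "(i',b) \<in> S" "b \<noteq> j" by blast
              show ?thesis using a b ii by (intro good_I2[OF a(1) b(1)] DDa DDb) auto
            qed
          qed
        qed
      qed
    qed
  qed
qed



lemma ceil3: "nat \<lceil>real n / 3\<rceil> = (n + 2) div 3"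
proof -
  have "\<lceil>real n / 3\<rceil> = int ((n + 2) div 3)"
  proof (rule ceiling_unique)
    have "n mod 3 = 0 \<or> n mod 3 = 1 \<or> n mod 3 = 2" by auto
    moreover have "n = 3 * (n div 3) + n mod 3" by simp
    ultimately obtain m r where mr: "n = 3 * m + r" "r = 0 \<or> r = 1 \<or> r = 2" by metis
    then have e: "(n + 2) div 3 = m + (if r = 0 then 0 else 1)" by auto
    show "real_of_int (int ((n + 2) div 3)) - 1 < real n / 3"
      using mr e by auto
    show "real n / 3 \<le> real_of_int (int ((n + 2) div 3))"
      using mr e by auto
  qed
  then show ?thesis by simp
qed

definition cp :: "nat \<Rightarrow> nat" where "cp n = (n + 1) div 3"
definition cq :: "nat \<Rightarrow> nat" where "cq n = n div 3"
definition ff :: "nat \<Rightarrow> nat \<Rightarrow> nat" where "ff n j = min (cp n) ((j - cq n + 1) div 2)"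
definition gg :: "nat \<Rightarrow> nat \<Rightarrow> nat" where "gg n i = min (cq n) ((i - cp n + 1) div 2)"
definition S0 :: "nat \<Rightarrow> (nat \<times> nat) set" where
  "S0 n = (\<lambda>j. (ff n j, j)) ` {cq n + 1..n} \<union> (\<lambda>i. (i, gg n i)) ` {cp n + 1..n}"

lemma cpq: assumes "n \<ge> 4"
  shows "1 \<le> cp n" "1 \<le> cq n" "cq n + 2 * cp n \<le> n" "cp n + 2 * cq n \<le> n"
    "n \<le> cp n + cq n + (n + 2) div 3"
  using assms unfolding cp_def cq_def by (auto, presburger)

lemma ff_range: "n \<ge> 4 \<Longrightarrow> j \<in> {cq n + 1..n} \<Longrightarrow> ff n j \<in> {1..cp n}"
  using cpq[of n] unfolding ff_def by auto
lemma gg_range: "n \<ge> 4 \<Longrightarrow> i \<in> {cp n + 1..n} \<Longrightarrow> gg n i \<in> {1..cq n}"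
  using cpq[of n] unfolding gg_def by auto

lemma ff_hit: "n \<ge> 4 \<Longrightarrow> c \<in> {1..cp n} \<Longrightarrow> ff n (cq n + 2 * c - 1) = c \<and> ff n (cq n + 2 * c) = c
   \<and> cq n + 2 * c - 1 \<in> {cq n + 1..n} \<and> cq n + 2 * c \<in> {cq n + 1..n}"
  using cpq[of n] unfolding ff_def by auto
lemma gg_hit: "n \<ge> 4 \<Longrightarrow> c \<in> {1..cq n} \<Longrightarrow> gg n (cp n + 2 * c - 1) = c \<and> gg n (cp n + 2 * c) = c
   \<and> cp n + 2 * c - 1 \<in> {cp n + 1..n} \<and> cp n + 2 * c \<in> {cp n + 1..n}"
  using cpq[of n] unfolding gg_def by auto

lemma S0_mem: "(a,b) \<in> S0 n \<longleftrightarrow> (b \<in> {cq n + 1..n} \<and> a = ff n b) \<or> (a \<in> {cp n + 1..n} \<and> b = gg n a)"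
  unfolding S0_def by auto

lemma S0_sub: "n \<ge> 4 \<Longrightarrow> S0 n \<subseteq> KnKn_V n"
  using ff_range[of n] gg_range[of n] cpq[of n] unfolding KnKn_V_def
  by (auto simp: S0_mem) (fastforce+)

lemma S0_card: "n \<ge> 4 \<Longrightarrow> card (S0 n) \<le> n + nat \<lceil>real n / 3\<rceil>"
proof -
  assume n: "n \<ge> 4"
  have "card (S0 n) \<le> card ((\<lambda>j. (ff n j, j)) ` {cq n + 1..n}) + card ((\<lambda>i. (i, gg n i)) ` {cp n + 1..n})"
    unfolding S0_def by (rule card_Un_le)
  also have "\<dots> \<le> card {cq n + 1..n} + card {cp n + 1..n}"
    by (intro add_mono card_image_le) auto
  also have "\<dots> \<le> n + nat \<lceil>real n / 3\<rceil>" using cpq[OF n] by (simp add: ceil3)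
  finally show ?thesis .
qed

lemma S0_cover: "n \<ge> 4 \<Longrightarrow> cover n (S0 n)"
  unfolding cover_def
proof (intro conjI ballI)
  assume n: "n \<ge> 4"
  fix i assume i: "i \<in> {1..n}"
  show "\<exists>j. (i, j) \<in> S0 n"
  proof (cases "i \<le> cp n")
    case True
    then show ?thesis using ff_hit[OF n, of i] i by (auto simp: S0_mem)
  next
    case False
    then show ?thesis using i by (auto simp: S0_mem)
  qed
next
  assume n: "n \<ge> 4"
  fix j assume j: "j \<in> {1..n}"
  show "\<exists>i. (i, j) \<in> S0 n"
  proof (cases "j \<le> cq n")
    case True
    then show ?thesis using gg_hit[OF n, of j] j by (auto simp: S0_mem)
  next
    case False
    then show ?thesis using j by (auto simp: S0_mem)
  qed
qed

lemma S0_star: assumes n: "n \<ge> 4" shows "star (S0 n)"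
  unfolding star_def
proof (intro allI impI)
  fix a b assume ab: "(a,b) \<in> S0 n"
  show "(\<forall>j'. (a, j') \<in> S0 n \<longrightarrow> j' = b) = (\<not> (\<forall>i'. (i', b) \<in> S0 n \<longrightarrow> i' = a))"
  proof (cases "b \<in> {cq n + 1..n} \<and> a = ff n b")
    case True
    then have a: "a \<in> {1..cp n}" using ff_range[OF n] by auto
    have colS: "\<forall>i'. (i', b) \<in> S0 n \<longrightarrow> i' = a"
    proof (intro allI impI)
      fix i' assume "(i', b) \<in> S0 n"
      moreover have "\<not> (i' \<in> {cp n + 1..n} \<and> b = gg n i')"
        using gg_range[OF n, of i'] True by auto
      ultimately show "i' = a" using True by (auto simp: S0_mem)
    qed
    have m: "(a, cq n + 2 * a - 1) \<in> S0 n" "(a, cq n + 2 * a) \<in> S0 n"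
      using ff_hit[OF n a] by (auto simp: S0_mem)
    have "cq n + 2 * a - 1 \<noteq> cq n + 2 * a" using a by auto
    then have "\<not> (\<forall>j'. (a, j') \<in> S0 n \<longrightarrow> j' = b)"
      using m by metis
    then show ?thesis using colS by blast
  next
    case False
    then have F: "a \<in> {cp n + 1..n}" "b = gg n a" using ab by (auto simp: S0_mem)
    then have b: "b \<in> {1..cq n}" using gg_range[OF n] by auto
    have rowS: "\<forall>j'. (a, j') \<in> S0 n \<longrightarrow> j' = b"
    proof (intro allI impI)
      fix j' assume "(a, j') \<in> S0 n"
      moreover have "\<not> (j' \<in> {cq n + 1..n} \<and> a = ff n j')"
        using ff_range[OF n, of j'] F by auto
      ultimately show "j' = b" using F by (auto simp: S0_mem)
    qed
    have m: "(cp n + 2 * b - 1, b) \<in> S0 n" "(cp n + 2 * b, b) \<in> S0 n"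
      using gg_hit[OF n b] by (auto simp: S0_mem)
    have "cp n + 2 * b - 1 \<noteq> cp n + 2 * b" using b by auto
    then have "\<not> (\<forall>i'. (i', b) \<in> S0 n \<longrightarrow> i' = a)"
      using m by metis
    then show ?thesis using rowS by blast
  qed
qed



definition RR :: "(nat \<times> nat) set \<Rightarrow> nat \<Rightarrow> nat" where "RR S i = card {p \<in> S. fst p = i}"
definition CC :: "(nat \<times> nat) set \<Rightarrow> nat \<Rightarrow> nat" where "CC S j = card {p \<in> S. snd p = j}"

lemma DD2: "DD z x y = 2 \<Longrightarrow> z = x \<or> z = y"
  by (auto simp: DD_def dd_def split: if_splits)

lemma card_rows: assumes "S \<subseteq> KnKn_V n" shows "card S = (\<Sum>i\<in>{1..n}. RR S i)"
proof -
  have f: "finite S" using assms finite_V finite_subset by blast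
  have "(\<Sum>i\<in>{1..n}. \<Sum>p\<in>{x. x \<in> S \<and> fst x = i}. (1::nat)) = (\<Sum>p\<in>S. 1)"
    using assms by (intro sum.group f) (auto simp: KnKn_V_def)
  then show ?thesis unfolding RR_def by simp
qed

lemma card_cols: assumes "S \<subseteq> KnKn_V n" shows "card S = (\<Sum>j\<in>{1..n}. CC S j)"
proof -
  have f: "finite S" using assms finite_V finite_subset by blast
  have "(\<Sum>j\<in>{1..n}. \<Sum>p\<in>{x. x \<in> S \<and> snd x = j}. (1::nat)) = (\<Sum>p\<in>S. 1)"
    using assms by (intro sum.group f) (auto simp: KnKn_V_def)
  then show ?thesis unfolding CC_def by simp
qed

lemma sum_invR: assumes "S \<subseteq> KnKn_V n" "\<forall>i\<in>{1..n}. RR S i > 0"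
  shows "(\<Sum>p\<in>S. 1 / real (RR S (fst p))) = real n"
proof -
  have f: "finite S" using assms finite_V finite_subset by blast
  have grp: "(\<Sum>i\<in>{1..n}. \<Sum>p\<in>{x. x \<in> S \<and> fst x = i}. 1 / real (RR S (fst p))) = (\<Sum>p\<in>S. 1 / real (RR S (fst p)))"
    using assms by (intro sum.group f) (auto simp: KnKn_V_def)
  have inner: "(\<Sum>p\<in>{x. x \<in> S \<and> fst x = i}. 1 / real (RR S (fst p))) = 1" if "i \<in> {1..n}" for i
  proof -
    have "(\<Sum>p\<in>{x. x \<in> S \<and> fst x = i}. 1 / real (RR S (fst p))) = (\<Sum>p\<in>{x. x \<in> S \<and> fst x = i}. 1 / real (RR S i))"
      by (rule sum.cong) auto
    also have "\<dots> = real (RR S i) * (1 / real (RR S i))" by (simp add: RR_def)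
    also have "\<dots> = 1" using assms(2) that by simp
    finally show ?thesis .
  qed
  have "(\<Sum>p\<in>S. 1 / real (RR S (fst p))) = (\<Sum>v\<in>{1..n}. \<Sum>p\<in>{x. x \<in> S \<and> fst x = v}. 1 / real (RR S (fst p)))"
    using grp by simp
  also have "\<dots> = (\<Sum>v\<in>{1..n}. (1::real))" by (rule sum.cong[OF refl]) (rule inner)
  also have "\<dots> = real n" by simp
  finally show ?thesis .
qed

lemma sum_invC: assumes "S \<subseteq> KnKn_V n" "\<forall>j\<in>{1..n}. CC S j > 0"
  shows "(\<Sum>p\<in>S. 1 / real (CC S (snd p))) = real n"
proof -
  have f: "finite S" using assms finite_V finite_subset by blast
  have grp: "(\<Sum>j\<in>{1..n}. \<Sum>p\<in>{x. x \<in> S \<and> snd x = j}. 1 / real (CC S (snd p))) = (\<Sum>p\<in>S. 1 / real (CC S (snd p)))"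
    using assms by (intro sum.group f) (auto simp: KnKn_V_def)
  have inner: "(\<Sum>p\<in>{x. x \<in> S \<and> snd x = j}. 1 / real (CC S (snd p))) = 1" if "j \<in> {1..n}" for j
  proof -
    have "(\<Sum>p\<in>{x. x \<in> S \<and> snd x = j}. 1 / real (CC S (snd p))) = (\<Sum>p\<in>{x. x \<in> S \<and> snd x = j}. 1 / real (CC S j))"
      by (rule sum.cong) auto
    also have "\<dots> = real (CC S j) * (1 / real (CC S j))" by (simp add: CC_def)
    also have "\<dots> = 1" using assms(2) that by simp
    finally show ?thesis .
  qed
  have "(\<Sum>p\<in>S. 1 / real (CC S (snd p))) = (\<Sum>v\<in>{1..n}. \<Sum>p\<in>{x. x \<in> S \<and> snd x = v}. 1 / real (CC S (snd p)))"
    using grp by simp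
  also have "\<dots> = (\<Sum>v\<in>{1..n}. (1::real))" by (rule sum.cong[OF refl]) (rule inner)
  also have "\<dots> = real n" by simp
  finally show ?thesis .
qed

lemma card2: "finite A \<Longrightarrow> z \<in> A \<Longrightarrow> z' \<in> A \<Longrightarrow> z \<noteq> z' \<Longrightarrow> 2 \<le> card A"
  by (metis card_2_iff card_mono empty_subsetI insert_subset)

lemma N1col:
  assumes n: "n \<ge> 4" and S: "S \<subseteq> KnKn_V n"
    and G: "\<forall>x\<in>KnKn_V n. \<forall>y\<in>KnKn_V n. x \<noteq> y \<longrightarrow> good S x y"
    and j: "j \<in> {1..n}" "CC S j = 0" and j': "j' \<in> {1..n}" "j' \<noteq> j"
  shows "CC S j' \<ge> 2"
proof (rule ccontr)
  assume "\<not> CC S j' \<ge> 2"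
  then have le1: "card {p \<in> S. snd p = j'} \<le> 1" by (simp add: CC_def)
  have f: "finite S" using S finite_V finite_subset by blast
  have "{p \<in> S. snd p = j} = {}" using j(2) f by (simp add: CC_def)
  then have e: "\<forall>p\<in>S. snd p \<noteq> j" by blast
  have "card (fst ` {p \<in> S. snd p = j'}) \<le> 1" using le1 card_image_le[of "{p \<in> S. snd p = j'}" fst] f
    by simp
  then have "card (fst ` {p \<in> S. snd p = j'}) < card {1..n}" using n by simp
  moreover have fin: "finite (fst ` {p \<in> S. snd p = j'})" using f by simp
  ultimately have "\<not> {1..n} \<subseteq> fst ` {p \<in> S. snd p = j'}" using card_mono[OF fin] by (meson not_le)
  then obtain i where i: "i \<in> {1..n}" "i \<notin> fst ` {p \<in> S. snd p = j'}"
    by blast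
  then have iS: "(i, j') \<notin> S" by force
  have jS: "(i, j) \<notin> S" using e by force
  have "good S (i,j) (i,j')" using G i j j' by (auto simp: KnKn_V_def)
  then show False unfolding good_def
  proof
    assume "\<exists>z\<in>S. DD z (i, j) (i, j') = 2"
    then show False using DD2 iS jS by blast
  next
    assume "\<exists>z\<in>S. \<exists>z'\<in>S. z \<noteq> z' \<and> 1 \<le> DD z (i, j) (i, j') \<and> 1 \<le> DD z' (i, j) (i, j')"
    then obtain z z' where zz: "z \<in> S" "z' \<in> S" "z \<noteq> z'" "1 \<le> DD z (i, j) (i, j')" "1 \<le> DD z' (i, j) (i, j')"
      by blast
    have key: "snd w = j'" if "w \<in> S" "1 \<le> DD w (i, j) (i, j')" for w
    proof -
      obtain a b where w: "w = (a,b)" by (cases w)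
      have "b \<noteq> j" using e that w by auto
      moreover have "w \<noteq> (i,j)" "w \<noteq> (i,j')" using that iS jS by auto
      ultimately show ?thesis using that(2) w
        by (cases "a = i"; cases "b = j'") (auto simp: DD_def dd_def)
    qed
    have "2 \<le> card {p \<in> S. snd p = j'}"
      using zz key f by (intro card2[of _ z z']) auto
    then show False using le1 by simp
  qed
qed

lemma N1row:
  assumes n: "n \<ge> 4" and S: "S \<subseteq> KnKn_V n"
    and G: "\<forall>x\<in>KnKn_V n. \<forall>y\<in>KnKn_V n. x \<noteq> y \<longrightarrow> good S x y"
    and j: "j \<in> {1..n}" "RR S j = 0" and j': "j' \<in> {1..n}" "j' \<noteq> j"
  shows "RR S j' \<ge> 2"
proof (rule ccontr)
  assume "\<not> RR S j' \<ge> 2"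
  then have le1: "card {p \<in> S. fst p = j'} \<le> 1" by (simp add: RR_def)
  have f: "finite S" using S finite_V finite_subset by blast
  have "{p \<in> S. fst p = j} = {}" using j(2) f by (simp add: RR_def)
  then have e: "\<forall>p\<in>S. fst p \<noteq> j" by blast
  have "card (snd ` {p \<in> S. fst p = j'}) \<le> 1" using le1 card_image_le[of "{p \<in> S. fst p = j'}" snd] f
    by simp
  then have "card (snd ` {p \<in> S. fst p = j'}) < card {1..n}" using n by simp
  moreover have fin: "finite (snd ` {p \<in> S. fst p = j'})" using f by simp
  ultimately have "\<not> {1..n} \<subseteq> snd ` {p \<in> S. fst p = j'}" using card_mono[OF fin] by (meson not_le)
  then obtain i where i: "i \<in> {1..n}" "i \<notin> snd ` {p \<in> S. fst p = j'}"
    by blast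
  then have iS: "(j', i) \<notin> S" by force
  have jS: "(j, i) \<notin> S" using e by force
  have "good S (j,i) (j',i)" using G i j j' by (auto simp: KnKn_V_def)
  then show False unfolding good_def
  proof
    assume "\<exists>z\<in>S. DD z (j, i) (j', i) = 2"
    then show False using DD2 iS jS by blast
  next
    assume "\<exists>z\<in>S. \<exists>z'\<in>S. z \<noteq> z' \<and> 1 \<le> DD z (j, i) (j', i) \<and> 1 \<le> DD z' (j, i) (j', i)"
    then obtain z z' where zz: "z \<in> S" "z' \<in> S" "z \<noteq> z'" "1 \<le> DD z (j, i) (j', i)" "1 \<le> DD z' (j, i) (j', i)"
      by blast
    have key: "fst w = j'" if "w \<in> S" "1 \<le> DD w (j, i) (j', i)" for w
    proof -
      obtain a b where w: "w = (a,b)" by (cases w)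
      have "a \<noteq> j" using e that w by auto
      moreover have "w \<noteq> (j,i)" "w \<noteq> (j',i)" using that iS jS by auto
      ultimately show ?thesis using that(2) w
        by (cases "b = i"; cases "a = j'") (auto simp: DD_def dd_def)
    qed
    have "2 \<le> card {p \<in> S. fst p = j'}"
      using zz key f by (intro card2[of _ z z']) auto
    then show False using le1 by simp
  qed
qed



lemma inv_le: "(k::nat) \<ge> 1 \<Longrightarrow> c \<ge> k \<Longrightarrow> 1 / real c \<le> 1 / real k"
  by (simp add: frac_le)

lemma wb1: "(r::nat) \<ge> 1 \<Longrightarrow> c \<ge> 1 \<Longrightarrow> \<not> (r = 1 \<and> c = 1) \<Longrightarrow> 1 / real r + 1 / real c \<le> 3/2"
proof -
  assume a: "r \<ge> 1" "c \<ge> 1" "\<not> (r = 1 \<and> c = 1)"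
  show ?thesis
  proof (cases "r = 1")
    case True
    then have "c \<ge> 2" using a by auto
    then have "1 / real c \<le> 1 / real (2::nat)" by (intro inv_le) auto
    then show ?thesis using True by simp
  next
    case False
    then have "r \<ge> 2" using a by auto
    then have "1 / real r \<le> 1 / real (2::nat)" by (intro inv_le) auto
    moreover have "1 / real c \<le> 1 / real (1::nat)" using a by (intro inv_le) auto
    ultimately show ?thesis by simp
  qed
qed

lemma wb2: "(r::nat) \<ge> 1 \<Longrightarrow> c \<ge> 1 \<Longrightarrow> r + c \<ge> 4 \<Longrightarrow> 1 / real r + 1 / real c \<le> 4/3"
proof -
  assume a: "r \<ge> 1" "c \<ge> 1" "r + c \<ge> 4"
  consider "r = 1" | "r = 2" | "r \<ge> 3" using a by linarith
  then show ?thesis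
  proof cases
    case 1
    then have "c \<ge> 3" using a by auto
    then have "1 / real c \<le> 1 / real (3::nat)" by (intro inv_le) auto
    then show ?thesis using 1 by simp
  next
    case 2
    then have "c \<ge> 2" using a by auto
    then have "1 / real c \<le> 1 / real (2::nat)" by (intro inv_le) auto
    then show ?thesis using 2 by simp
  next
    case 3
    then have "1 / real r \<le> 1 / real (3::nat)" by (intro inv_le) auto
    moreover have "1 / real c \<le> 1 / real (1::nat)" using a by (intro inv_le) auto
    ultimately show ?thesis by simp
  qed
qed

lemma card1_eq: "card A = 1 \<Longrightarrow> a \<in> A \<Longrightarrow> b \<in> A \<Longrightarrow> b = a"
  by (metis card_1_singletonE singletonD)

lemma N2:
  assumes S: "S \<subseteq> KnKn_V n"
    and G: "\<forall>x\<in>KnKn_V n. \<forall>y\<in>KnKn_V n. x \<noteq> y \<longrightarrow> good S x y"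
    and p0: "p0 \<in> S" "RR S (fst p0) = 1" "CC S (snd p0) = 1"
    and q: "q \<in> S" "q \<noteq> p0"
  shows "RR S (fst q) + CC S (snd q) \<ge> 4"
proof -
  have f: "finite S" using S finite_V finite_subset by blast
  obtain i0 j0 where P: "p0 = (i0,j0)" by (cases p0)
  obtain i' j where Q: "q = (i',j)" by (cases q)
  have rowp: "w = p0" if "w \<in> S" "fst w = i0" for w
    using card1_eq[of "{p \<in> S. fst p = fst p0}" p0 w] p0 that P by (simp add: RR_def)
  have colp: "w = p0" if "w \<in> S" "snd w = j0" for w
    using card1_eq[of "{p \<in> S. snd p = snd p0}" p0 w] p0 that P by (simp add: CC_def)
  have ii: "i' \<noteq> i0" using rowp q Q by auto
  have jj: "j \<noteq> j0" using colp q Q by auto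
  have inV: "i0 \<in> {1..n}" "j0 \<in> {1..n}" "i' \<in> {1..n}" "j \<in> {1..n}"
    using S p0 q P Q by (auto simp: KnKn_V_def)
  have xS: "(i0,j) \<notin> S" using rowp P jj by fastforce
  have yS: "(i',j0) \<notin> S" using colp P ii by fastforce
  have "good S (i0,j) (i',j0)" using G inV ii by (auto simp: KnKn_V_def)
  then have "\<exists>z\<in>S. \<exists>z'\<in>S. z \<noteq> z' \<and> 1 \<le> DD z (i0,j) (i',j0) \<and> 1 \<le> DD z' (i0,j) (i',j0)"
    unfolding good_def using DD2 xS yS by blast
  then obtain z z' where zz: "z \<in> S" "z' \<in> S" "z \<noteq> z'" "1 \<le> DD z (i0,j) (i',j0)" "1 \<le> DD z' (i0,j) (i',j0)"
    by blast
  have key: "w \<noteq> q \<and> (fst w = i' \<or> snd w = j)" if "w \<in> S" "1 \<le> DD w (i0,j) (i',j0)" for w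
  proof -
    obtain a b where w: "w = (a,b)" by (cases w)
    have "a \<noteq> i0"
    proof
      assume "a = i0" then have "w = p0" using rowp that w by auto
      then show False using that(2) P ii jj by (simp add: DD_def dd_def)
    qed
    moreover have "b \<noteq> j0"
    proof
      assume "b = j0" then have "w = p0" using colp that w by auto
      then show False using that(2) P ii jj by (simp add: DD_def dd_def)
    qed
    moreover have "w \<noteq> q" using that(2) Q ii jj by (auto simp: DD_def dd_def)
    ultimately show ?thesis using that(2) w
      by (cases "a = i'"; cases "b = j") (auto simp: DD_def dd_def)
  qed
  define A where "A = {p \<in> S. fst p = i'}"
  define B where "B = {p \<in> S. snd p = j}"
  have fAB: "finite A" "finite B" using f by (auto simp: A_def B_def)
  have "{z, z', q} \<subseteq> A \<union> B" using key zz q Q by (auto simp: A_def B_def)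
  moreover have "card {z, z', q} = 3" using key zz by auto
  ultimately have "3 \<le> card (A \<union> B)" using fAB by (metis card_mono finite_UnI)
  moreover have "q \<in> A \<inter> B" using q Q by (simp add: A_def B_def)
  then have "1 \<le> card (A \<inter> B)" using fAB
    by (metis One_nat_def Suc_leI card_gt_0_iff empty_iff finite_Int)
  moreover have "card A + card B = card (A \<union> B) + card (A \<inter> B)" using fAB by (rule card_Un_Int)
  ultimately show ?thesis using Q by (simp add: RR_def CC_def A_def B_def)
qed



lemma lower4:
  assumes n: "n \<ge> 4" and S: "S \<subseteq> KnKn_V n"
    and G: "\<forall>x\<in>KnKn_V n. \<forall>y\<in>KnKn_V n. x \<noteq> y \<longrightarrow> good S x y"
  shows "4 * n \<le> 3 * card S"
proof -
  have f: "finite S" using S finite_V finite_subset by blast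
  show ?thesis
  proof (cases "\<exists>j\<in>{1..n}. CC S j = 0")
    case True
    then obtain j where j: "j \<in> {1..n}" "CC S j = 0" by blast
    have "(\<Sum>j'\<in>{1..n} - {j}. (2::nat)) \<le> (\<Sum>j'\<in>{1..n} - {j}. CC S j')"
      using N1col[OF n S G j] by (intro sum_mono) auto
    also have "\<dots> \<le> (\<Sum>j'\<in>{1..n}. CC S j')" by (intro sum_mono2) auto
    also have "\<dots> = card S" using card_cols[OF S] by simp
    finally have "2 * (n - 1) \<le> card S" using j by simp
    then show ?thesis using n by linarith
  next
    case noC: False
    show ?thesis
    proof (cases "\<exists>i\<in>{1..n}. RR S i = 0")
      case True
      then obtain j where j: "j \<in> {1..n}" "RR S j = 0" by blast
      have "(\<Sum>j'\<in>{1..n} - {j}. (2::nat)) \<le> (\<Sum>j'\<in>{1..n} - {j}. RR S j')"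
        using N1row[OF n S G j] by (intro sum_mono) auto
      also have "\<dots> \<le> (\<Sum>j'\<in>{1..n}. RR S j')" by (intro sum_mono2) auto
      also have "\<dots> = card S" using card_rows[OF S] by simp
      finally have "2 * (n - 1) \<le> card S" using j by simp
      then show ?thesis using n by linarith
    next
      case noR: False
      have Rp: "\<forall>i\<in>{1..n}. RR S i > 0" using noR by auto
      have Cp: "\<forall>j\<in>{1..n}. CC S j > 0" using noC by auto
      have Rp1: "RR S (fst p) \<ge> 1" "CC S (snd p) \<ge> 1" if "p \<in> S" for p
        using Rp Cp that S by (auto simp: KnKn_V_def Suc_le_eq)
      define w where "w p = 1 / real (RR S (fst p)) + 1 / real (CC S (snd p))" for p
      have W: "(\<Sum>p\<in>S. w p) = 2 * real n"
        unfolding w_def sum.distrib sum_invR[OF S Rp] sum_invC[OF S Cp] by simp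
      have "4 * real n \<le> 3 * real (card S)"
      proof (cases "\<exists>p0\<in>S. RR S (fst p0) = 1 \<and> CC S (snd p0) = 1")
        case True
        then obtain p0 where p0: "p0 \<in> S" "RR S (fst p0) = 1" "CC S (snd p0) = 1" by blast
        have "(\<Sum>p\<in>S. w p) = w p0 + (\<Sum>p\<in>S - {p0}. w p)" using f p0 by (simp add: sum.remove)
        also have "(\<Sum>p\<in>S - {p0}. w p) \<le> (\<Sum>p\<in>S - {p0}. 4/3)"
        proof (rule sum_mono)
          fix q assume "q \<in> S - {p0}"
          then show "w q \<le> 4/3" unfolding w_def
            using wb2 Rp1 N2[OF S G p0, of q] by auto
        qed
        also have "w p0 = 2" using p0 by (simp add: w_def)
        finally have "2 * real n \<le> 2 + real (card S - 1) * 4/3" using W f p0 by simp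
        moreover have "real (card S - 1) = real (card S) - 1" using p0 f
          by (metis One_nat_def Suc_leI card_gt_0_iff empty_iff of_nat_diff of_nat_1)
        ultimately show ?thesis using n by linarith
      next
        case False
        have "(\<Sum>p\<in>S. w p) \<le> (\<Sum>p\<in>S. 3/2)"
        proof (rule sum_mono)
          fix q assume "q \<in> S"
          then show "w q \<le> 3/2" unfolding w_def
            using wb1 Rp1 False by auto
        qed
        then show ?thesis using W by simp
      qed
      then show ?thesis by linarith
    qed
  qed
qed

lemma lower:
  assumes n: "n \<ge> 4" and R: "weak_k_resolving KnKn_E (KnKn_V n) 2 S"
  shows "n + nat \<lceil>real n / 3\<rceil> \<le> card S"
proof -
  have "4 * n \<le> 3 * card S" using R resolving_iff[of n] n lower4[OF n] by auto
  then show ?thesis unfolding ceil3 by linarith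
qed

theorem mainTheorem3:
  fixes n :: nat
  assumes "n \<ge> 4"
  shows "wdim 2 KnKn_E (KnKn_V n) = n + nat \<lceil>real n / 3\<rceil>"
proof -
  have n3: "n \<ge> 3" using assms by simp
  have R0: "weak_k_resolving KnKn_E (KnKn_V n) 2 (S0 n)"
    unfolding resolving_iff[OF n3]
    using S0_sub[OF assms] suff[OF S0_sub[OF assms] S0_star[OF assms] S0_cover[OF assms]] by blast
  have c0: "card (S0 n) = n + nat \<lceil>real n / 3\<rceil>"
    using S0_card[OF assms] lower[OF assms R0] by simp
  show ?thesis unfolding wdim_def
  proof (rule Least_equality)
    show "\<exists>S. weak_k_resolving KnKn_E (KnKn_V n) 2 S \<and> card S = n + nat \<lceil>real n / 3\<rceil>"
      using R0 c0 by blast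
  next
    fix m assume "\<exists>S. weak_k_resolving KnKn_E (KnKn_V n) 2 S \<and> card S = m"
    then show "n + nat \<lceil>real n / 3\<rceil> \<le> m" using lower[OF assms] by blast
  qed
qed

end
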